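(* Let $G$ be a simple, biconnected, planar graph of maximum degree at most $k$, and let $\mathcal{T}$ be its SPQR-tree, rooted at a Q-node. Let $\mu$ be a node of $\mathcal{T}$ that is not the root, let $\mu'$ be its parent, and let $\{s,t\}$ be the poles of $\mu$. Then for every $v\in\{s,t\}$, the degree of $v$ in the pertinent graph of $\mu$ is at most $k-2$ if $\mu'$ is a P-node or an R-node, and at most $k-1$ otherwise (i.e., if $\mu'$ is an S-node or a Q-node).
   Context: The SPQR-tree (with Q-nodes) of a biconnected graph $G$ is the standard decomposition tree of $G$ into its triconnected components. Each node $\mu$ has a skeleton graph $\mathrm{skel}(\mu)$: for a Q-node it consists of two parallel edges, one of which (the real edge) is an edge of $G$; for an S-node it is a simple cycle of length at least three; for a P-node it is a bundle of at least three parallel edges between two vertices; for an R-node it is a simple triconnected graph. Non-real skeleton edges are virtual edges; each virtual edge of $\mathrm{skel}(\mu)$ corresponds to a tree neighbour $\mu''$ of $\mu$ and to a twin virtual edge in $\mathrm{skel}(\mu'')$. The leaves are exactly the Q-nodes, one per edge of $G$; no two S-nodes and no two P-nodes are adjacent. When the tree is rooted at a Q-node, every non-root node $\mu$ has exactly one virtual edge (the reference edge) whose twin lies in the skeleton of its parent; the endpoints $s,t$ of the reference edge are the poles of $\mu$. The pertinent graph of $\mu$ is the subgraph of $G$ formed by the real edges of the Q-nodes in the subtree rooted at $\mu$ (equivalently, obtained by recursively replacing the non-reference virtual edges of $\mathrm{skel}(\mu)$ by the skeletons of the corresponding children). *)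

theory Defs
  imports "HOL-Analysis.Analysis"
begin

definition simple_graph :: "'v set \<Rightarrow> 'v set set \<Rightarrow> bool" where
  "simple_graph V E \<longleftrightarrow> finite V \<and>
     (\<forall>e\<in>E. \<exists>x y. x \<noteq> y \<and> x \<in> V \<and> y \<in> V \<and> e = {x, y})"

definition adj :: "'v set set \<Rightarrow> ('v \<times> 'v) set" where
  "adj E = {(x, y). {x, y} \<in> E}"

definition connected_graph :: "'v set \<Rightarrow> 'v set set \<Rightarrow> bool" where
  "connected_graph V E \<longleftrightarrow>
     (\<forall>u\<in>V. \<forall>w\<in>V. (u, w) \<in> (adj {e\<in>E. e \<subseteq> V})\<^sup>*)"

definition degree :: "'v set set \<Rightarrow> 'v \<Rightarrow> nat" where
  "degree E v = card {e\<in>E. v \<in> e}"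

definition biconnected :: "'v set \<Rightarrow> 'v set set \<Rightarrow> bool" where
  "biconnected V E \<longleftrightarrow> card V \<ge> 2 \<and> connected_graph V E \<and>
     (\<forall>v\<in>V. connected_graph (V - {v}) {e\<in>E. v \<notin> e})"

definition triconnected :: "'v set \<Rightarrow> 'v set set \<Rightarrow> bool" where
  "triconnected V E \<longleftrightarrow> finite V \<and> card V \<ge> 4 \<and>
     (\<forall>X\<subseteq>V. card X \<le> 2 \<longrightarrow> connected_graph (V - X) {e\<in>E. e \<inter> X = {}})"

definition cycle_graph :: "'v set \<Rightarrow> 'v set set \<Rightarrow> bool" where
  "cycle_graph V E \<longleftrightarrow> (\<exists>vs. distinct vs \<and> length vs \<ge> 3 \<and> set vs = V \<and>
     E = {{vs ! i, vs ! ((i + 1) mod length vs)} | i. i < length vs})"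

text \<open>Planarity: a drawing in the plane (identified with the complex numbers) with
  vertices as distinct points, edges as arcs joining their endpoints, no edge passing
  through a vertex other than its endpoints, and distinct edges meeting only in
  common endpoints.\<close>
definition planar :: "'v set \<Rightarrow> 'v set set \<Rightarrow> bool" where
  "planar V E \<longleftrightarrow> (\<exists>(p :: 'v \<Rightarrow> complex) (\<gamma> :: 'v set \<Rightarrow> real \<Rightarrow> complex).
     inj_on p V \<and>
     (\<forall>e\<in>E. arc (\<gamma> e) \<and> {pathstart (\<gamma> e), pathfinish (\<gamma> e)} = p ` e \<and>
              path_image (\<gamma> e) \<inter> p ` V = p ` e) \<and>
     (\<forall>e\<in>E. \<forall>e'\<in>E. e \<noteq> e' \<longrightarrow> path_image (\<gamma> e) \<inter> path_image (\<gamma> e') \<subseteq> p ` (e \<inter> e')))"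

definition is_tree :: "'n set \<Rightarrow> 'n set set \<Rightarrow> bool" where
  "is_tree N TE \<longleftrightarrow> finite N \<and> N \<noteq> {} \<and> simple_graph N TE \<and> connected_graph N TE \<and>
     card TE + 1 = card N"

definition parent_rel :: "'n set \<Rightarrow> 'n \<Rightarrow> ('n \<Rightarrow> 'n) \<Rightarrow> ('n \<times> 'n) set" where
  "parent_rel N r par = {(x, par x) | x. x \<in> N \<and> x \<noteq> r}"

definition rooted_at :: "'n set \<Rightarrow> 'n set set \<Rightarrow> 'n \<Rightarrow> ('n \<Rightarrow> 'n) \<Rightarrow> bool" where
  "rooted_at N TE r par \<longleftrightarrow> r \<in> N \<and>
     (\<forall>x\<in>N - {r}. par x \<in> N \<and> {x, par x} \<in> TE) \<and>
     (\<forall>x\<in>N. (x, r) \<in> (parent_rel N r par)\<^sup>*)"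

datatype node_kind = QN | SN | PN | RN

text \<open>Skeleton edges are identifiers of type 'e; SE mu is the edge set of skel(mu),
  ends e the (two) end vertices of e (named by vertices of G), RealE the set of real
  edges. For a virtual edge e of skel(mu), nbr e is the corresponding tree neighbour and
  twin e its twin virtual edge in skel(nbr e).\<close>
definition skverts :: "('n \<Rightarrow> 'e set) \<Rightarrow> ('e \<Rightarrow> 'v set) \<Rightarrow> 'n \<Rightarrow> 'v set" where
  "skverts SE ends \<mu> = \<Union> (ends ` SE \<mu>)"

definition is_SPQR_tree ::
  "'v set \<Rightarrow> 'v set set \<Rightarrow> 'n set \<Rightarrow> 'n set set \<Rightarrow> ('n \<Rightarrow> node_kind) \<Rightarrow>
   ('n \<Rightarrow> 'e set) \<Rightarrow> ('e \<Rightarrow> 'v set) \<Rightarrow> 'e set \<Rightarrow> ('e \<Rightarrow> 'n) \<Rightarrow> ('e \<Rightarrow> 'e) \<Rightarrow> bool" where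
  "is_SPQR_tree V E N TE kind SE ends RealE nbr twin \<longleftrightarrow>
     is_tree N TE \<and>
     (\<forall>\<mu>\<in>N. finite (SE \<mu>)) \<and>
     (\<forall>\<mu>\<in>N. \<forall>\<nu>\<in>N. \<mu> \<noteq> \<nu> \<longrightarrow> SE \<mu> \<inter> SE \<nu> = {}) \<and>
     (\<forall>\<mu>\<in>N. \<forall>e\<in>SE \<mu>. card (ends e) = 2) \<and>
     \<comment> \<open>real edges: exactly one in each Q-node, none elsewhere, in bijection with E\<close>
     RealE \<subseteq> (\<Union>\<mu>\<in>N. SE \<mu>) \<and>
     bij_betw ends RealE E \<and>
     (\<forall>\<mu>\<in>N. kind \<mu> = QN \<longrightarrow> card (SE \<mu>) = 2 \<and> card (SE \<mu> \<inter> RealE) = 1 \<and>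
                              (\<forall>e\<in>SE \<mu>. \<forall>f\<in>SE \<mu>. ends e = ends f)) \<and>
     (\<forall>\<mu>\<in>N. kind \<mu> \<noteq> QN \<longrightarrow> SE \<mu> \<inter> RealE = {}) \<and>
     \<comment> \<open>skeleton shapes\<close>
     (\<forall>\<mu>\<in>N. kind \<mu> = SN \<longrightarrow>
         inj_on ends (SE \<mu>) \<and> cycle_graph (skverts SE ends \<mu>) (ends ` SE \<mu>)) \<and>
     (\<forall>\<mu>\<in>N. kind \<mu> = PN \<longrightarrow>
         card (SE \<mu>) \<ge> 3 \<and> (\<exists>s t. s \<noteq> t \<and> (\<forall>e\<in>SE \<mu>. ends e = {s, t}))) \<and>
     (\<forall>\<mu>\<in>N. kind \<mu> = RN \<longrightarrow>
         inj_on ends (SE \<mu>) \<and> triconnected (skverts SE ends \<mu>) (ends ` SE \<mu>)) \<and>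
     \<comment> \<open>virtual edges correspond to tree neighbours and have twins\<close>
     (\<forall>\<mu>\<in>N. bij_betw nbr (SE \<mu> - RealE) {\<nu>. {\<mu>, \<nu>} \<in> TE}) \<and>
     (\<forall>\<mu>\<in>N. \<forall>e\<in>SE \<mu> - RealE.
         twin e \<in> SE (nbr e) - RealE \<and> nbr (twin e) = \<mu> \<and> ends (twin e) = ends e) \<and>
     \<comment> \<open>no two adjacent S-nodes, no two adjacent P-nodes\<close>
     (\<forall>\<mu>\<in>N. \<forall>\<nu>\<in>N. {\<mu>, \<nu>} \<in> TE \<longrightarrow>
         \<not> (kind \<mu> = SN \<and> kind \<nu> = SN) \<and> \<not> (kind \<mu> = PN \<and> kind \<nu> = PN)) \<and>
     \<comment> \<open>merging the skeletons along twin virtual edges yields G\<close>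
     (\<forall>\<mu>\<in>N. \<forall>e\<in>SE \<mu> - RealE. skverts SE ends \<mu> \<inter> skverts SE ends (nbr e) = ends e) \<and>
     (\<forall>w. connected_graph {\<mu>\<in>N. w \<in> skverts SE ends \<mu>} TE) \<and>
     V = (\<Union>\<mu>\<in>N. skverts SE ends \<mu>)"

definition pertinent_edges ::
  "'n set \<Rightarrow> 'n \<Rightarrow> ('n \<Rightarrow> 'n) \<Rightarrow> ('n \<Rightarrow> 'e set) \<Rightarrow> ('e \<Rightarrow> 'v set) \<Rightarrow> 'e set \<Rightarrow> 'n \<Rightarrow> 'v set set" where
  "pertinent_edges N r par SE ends RealE \<mu> =
     {ends f | f \<nu>. \<nu> \<in> N \<and> (\<nu>, \<mu>) \<in> (parent_rel N r par)\<^sup>* \<and> f \<in> SE \<nu> \<inter> RealE}"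

end

theory Submission
  imports Defs
begin

lemma bspec2: "\<forall>a\<in>A. \<forall>b\<in>A. P a b \<Longrightarrow> x \<in> A \<Longrightarrow> y \<in> A \<Longrightarrow> P x y" by blast

lemma first_step: "(a, b) \<in> r\<^sup>* \<Longrightarrow> a \<noteq> b \<Longrightarrow> \<exists>c. (a, c) \<in> r"
  by (meson rtranclD tranclD)

locale spqr =
  fixes V :: "'v set" and E :: "'v set set"
    and N :: "'n set" and TE :: "'n set set" and kind :: "'n \<Rightarrow> node_kind"
    and SE :: "'n \<Rightarrow> 'e set" and ends :: "'e \<Rightarrow> 'v set" and RealE :: "'e set"
    and nbr :: "'e \<Rightarrow> 'n" and twin :: "'e \<Rightarrow> 'e"
    and r :: 'n and par :: "'n \<Rightarrow> 'n"
  assumes T: "is_SPQR_tree V E N TE kind SE ends RealE nbr twin"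
    and RT: "rooted_at N TE r par" and rootQ: "kind r = QN"
begin

abbreviation "R \<equiv> parent_rel N r par"

lemma tree: "is_tree N TE" using T unfolding is_SPQR_tree_def by blast
lemma finN: "finite N" using tree unfolding is_tree_def by blast
lemma sgT: "simple_graph N TE" using tree unfolding is_tree_def by blast
lemma rN: "r \<in> N" using RT unfolding rooted_at_def by blast

lemma par_in: "x \<in> N \<Longrightarrow> x \<noteq> r \<Longrightarrow> par x \<in> N \<and> {x, par x} \<in> TE"
  using RT unfolding rooted_at_def by blast

lemma reach: "x \<in> N \<Longrightarrow> (x, r) \<in> R\<^sup>*"
  using RT unfolding rooted_at_def by blast

lemma R_iff: "(a, b) \<in> R \<longleftrightarrow> a \<in> N \<and> a \<noteq> r \<and> b = par a"
  unfolding parent_rel_def by blast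

lemma TE_sub: "y \<in> TE \<Longrightarrow> y \<subseteq> N \<and> card y = 2"
  using sgT unfolding simple_graph_def by (auto simp: card_insert_if)

lemma cyc_prop: assumes c: "(x, x) \<in> R\<^sup>+" shows "(x, y) \<in> R\<^sup>* \<Longrightarrow> (y, y) \<in> R\<^sup>+"
proof (induction rule: rtrancl_induct)
  case base thus ?case using c .
next
  case (step y z)
  from step.IH obtain w where w: "(y, w) \<in> R" "(w, y) \<in> R\<^sup>*"
    by (meson tranclD)
  have "w = z" using w(1) step.hyps(2) by (simp add: R_iff)
  thus ?case using w step.hyps(2) by (meson rtrancl_into_trancl1)
qed

lemma acyc: "acyclic R"
proof -
  { fix x assume x: "(x, x) \<in> R\<^sup>+"
    then have "x \<in> N" by (metis R_iff tranclD)
    with x have "(r, r) \<in> R\<^sup>+" using cyc_prop reach by blast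
    then obtain w where "(r, w) \<in> R" by (meson tranclD)
    hence False by (simp add: R_iff) }
  thus ?thesis unfolding acyclic_def by blast
qed

lemma finR: "finite R"
proof -
  have "R \<subseteq> N \<times> N" using par_in by (auto simp: R_iff)
  thus ?thesis using finN finite_subset by blast
qed

lemma wfR: "wf R" using finR acyc finite_acyclic_wf by blast
lemma wfR': "wf (R\<inverse>)" using finR acyc finite_acyclic_wf acyclic_converse finite_converse by blast

lemma comparable: "(z, a) \<in> R\<^sup>* \<Longrightarrow> (z, b) \<in> R\<^sup>* \<Longrightarrow> (a, b) \<in> R\<^sup>* \<or> (b, a) \<in> R\<^sup>*"
proof (induction rule: rtrancl_induct)
  case base thus ?case by blast
next
  case (step a a')
  from step.IH[OF step.prems] show ?case
  proof
    assume ab: "(a, b) \<in> R\<^sup>*"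
    show ?thesis
    proof (cases "a = b")
      case True thus ?thesis using step.hyps(2) by blast
    next
      case False
      then obtain w where w: "(a, w) \<in> R" "(w, b) \<in> R\<^sup>*" using ab by (metis converse_rtranclE)
      have "w = a'" using w(1) step.hyps(2) by (simp add: R_iff)
      thus ?thesis using w by blast
    qed
  next
    assume "(b, a) \<in> R\<^sup>*" thus ?thesis using step.hyps(2) by (meson rtrancl.rtrancl_into_rtrancl)
  qed
qed

lemma sibling:
  assumes "c1 \<noteq> c2" "c1 \<in> N" "c2 \<in> N" "c1 \<noteq> r" "c2 \<noteq> r" "par c1 = par c2"
    "(y, c1) \<in> R\<^sup>*" "(y, c2) \<in> R\<^sup>*"
  shows False
proof -
  have key: "\<And>a b. a \<noteq> b \<Longrightarrow> a \<in> N \<Longrightarrow> b \<in> N \<Longrightarrow> a \<noteq> r \<Longrightarrow> b \<noteq> r \<Longrightarrow> par a = par b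
     \<Longrightarrow> (a, b) \<in> R\<^sup>* \<Longrightarrow> False"
  proof -
    fix a b assume h: "a \<noteq> b" "a \<in> N" "b \<in> N" "a \<noteq> r" "b \<noteq> r" "par a = par b" "(a, b) \<in> R\<^sup>*"
    from h(7) h(1) obtain w where w: "(a, w) \<in> R" "(w, b) \<in> R\<^sup>*"
      by (meson converse_rtranclE)
    have "w = par b" using w(1) h by (simp add: R_iff)
    moreover have "(b, par b) \<in> R" using h by (simp add: R_iff)
    ultimately have "(b, b) \<in> R\<^sup>+" using w(2) by (meson rtrancl_into_trancl2)
    thus False using acyc unfolding acyclic_def by blast
  qed
  from comparable[OF assms(7,8)] show False
    using key assms by metis
qed

lemma par_ne: "x \<in> N \<Longrightarrow> x \<noteq> r \<Longrightarrow> par x \<noteq> x"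
  using par_in TE_sub by fastforce

lemma TE_char:
  assumes "{x, c} \<in> TE"
  shows "(c \<noteq> r \<and> par c = x) \<or> (x \<noteq> r \<and> par x = c)"
proof -
  define h where "h = (\<lambda>y. {y, par y})"
  have inj: "inj_on h (N - {r})"
  proof (rule inj_onI)
    fix a b assume a: "a \<in> N - {r}" and b: "b \<in> N - {r}" and eq: "h a = h b"
    show "a = b"
    proof (rule ccontr)
      assume ne: "a \<noteq> b"
      from eq ne have "a = par b" "b = par a" unfolding h_def by (auto simp: doubleton_eq_iff)
      hence "(a, b) \<in> R" "(b, a) \<in> R" using a b by (auto simp: R_iff)
      hence "(a, a) \<in> R\<^sup>+" by auto
      thus False using acyc unfolding acyclic_def by blast
    qed
  qed
  have sub: "h ` (N - {r}) \<subseteq> TE" using par_in h_def by auto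
  have finTE: "finite TE"
  proof -
    have "TE \<subseteq> Pow N" using TE_sub by blast
    thus ?thesis using finN by (meson finite_Pow_iff finite_subset)
  qed
  have "card (h ` (N - {r})) = card N - 1" using card_image[OF inj] rN finN by simp
  also have "\<dots> = card TE" using tree unfolding is_tree_def by (elim conjE) linarith
  finally have "h ` (N - {r}) = TE" using sub finTE by (simp add: card_subset_eq)
  with assms obtain y where y: "y \<in> N - {r}" "{x, c} = {y, par y}" by (metis h_def imageE)
  thus ?thesis by (auto simp: doubleton_eq_iff)
qed


lemma finSE: "\<mu> \<in> N \<Longrightarrow> finite (SE \<mu>)" using T[unfolded is_SPQR_tree_def, THEN conjunct2, THEN conjunct1] by blast
lemma disjSE: "\<mu> \<in> N \<Longrightarrow> \<nu> \<in> N \<Longrightarrow> \<mu> \<noteq> \<nu> \<Longrightarrow> SE \<mu> \<inter> SE \<nu> = {}"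
  using T[unfolded is_SPQR_tree_def, THEN conjunct2, THEN conjunct2, THEN conjunct1] by blast
lemma card2: "\<mu> \<in> N \<Longrightarrow> e \<in> SE \<mu> \<Longrightarrow> card (ends e) = 2"
  using T[unfolded is_SPQR_tree_def, THEN conjunct2, THEN conjunct2, THEN conjunct2, THEN conjunct1] by blast
lemma realsub: "RealE \<subseteq> (\<Union>\<mu>\<in>N. SE \<mu>)" using T[unfolded is_SPQR_tree_def, THEN conjunct2, THEN conjunct2, THEN conjunct2, THEN conjunct2, THEN conjunct1] by blast
lemma bijE: "bij_betw ends RealE E" using T[unfolded is_SPQR_tree_def, THEN conjunct2, THEN conjunct2, THEN conjunct2, THEN conjunct2, THEN conjunct2, THEN conjunct1] by blast
lemma Qk: "\<mu> \<in> N \<Longrightarrow> kind \<mu> = QN \<Longrightarrow> card (SE \<mu>) = 2 \<and> card (SE \<mu> \<inter> RealE) = 1 \<and>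
                              (\<forall>e\<in>SE \<mu>. \<forall>f\<in>SE \<mu>. ends e = ends f)"
  using T[unfolded is_SPQR_tree_def, THEN conjunct2, THEN conjunct2, THEN conjunct2, THEN conjunct2, THEN conjunct2, THEN conjunct2, THEN conjunct1] by blast
lemma nonQ: "\<mu> \<in> N \<Longrightarrow> kind \<mu> \<noteq> QN \<Longrightarrow> SE \<mu> \<inter> RealE = {}"
  using T[unfolded is_SPQR_tree_def, THEN conjunct2, THEN conjunct2, THEN conjunct2, THEN conjunct2, THEN conjunct2, THEN conjunct2, THEN conjunct2, THEN conjunct1] by blast
lemma Sk: "\<mu> \<in> N \<Longrightarrow> kind \<mu> = SN \<Longrightarrow> cycle_graph (skverts SE ends \<mu>) (ends ` SE \<mu>)"
  using T[unfolded is_SPQR_tree_def, THEN conjunct2, THEN conjunct2, THEN conjunct2, THEN conjunct2, THEN conjunct2, THEN conjunct2, THEN conjunct2, THEN conjunct2, THEN conjunct1] by blast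
lemma Pk: "\<mu> \<in> N \<Longrightarrow> kind \<mu> = PN \<Longrightarrow> card (SE \<mu>) \<ge> 3 \<and> (\<exists>s t. s \<noteq> t \<and> (\<forall>e\<in>SE \<mu>. ends e = {s, t}))"
  using T[unfolded is_SPQR_tree_def, THEN conjunct2, THEN conjunct2, THEN conjunct2, THEN conjunct2, THEN conjunct2, THEN conjunct2, THEN conjunct2, THEN conjunct2, THEN conjunct2, THEN conjunct1] by blast
lemma Rk: "\<mu> \<in> N \<Longrightarrow> kind \<mu> = RN \<Longrightarrow> triconnected (skverts SE ends \<mu>) (ends ` SE \<mu>)"
  using T[unfolded is_SPQR_tree_def, THEN conjunct2, THEN conjunct2, THEN conjunct2, THEN conjunct2, THEN conjunct2, THEN conjunct2, THEN conjunct2, THEN conjunct2, THEN conjunct2, THEN conjunct2, THEN conjunct1] by blast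
lemma nbr_bij: "\<mu> \<in> N \<Longrightarrow> bij_betw nbr (SE \<mu> - RealE) {\<nu>. {\<mu>, \<nu>} \<in> TE}"
  using T[unfolded is_SPQR_tree_def, THEN conjunct2, THEN conjunct2, THEN conjunct2, THEN conjunct2, THEN conjunct2, THEN conjunct2, THEN conjunct2, THEN conjunct2, THEN conjunct2, THEN conjunct2, THEN conjunct2, THEN conjunct1] by blast
lemma twinP: "\<mu> \<in> N \<Longrightarrow> e \<in> SE \<mu> - RealE \<Longrightarrow>
         twin e \<in> SE (nbr e) - RealE \<and> nbr (twin e) = \<mu> \<and> ends (twin e) = ends e"
  using T[unfolded is_SPQR_tree_def, THEN conjunct2, THEN conjunct2, THEN conjunct2, THEN conjunct2, THEN conjunct2, THEN conjunct2, THEN conjunct2, THEN conjunct2, THEN conjunct2, THEN conjunct2, THEN conjunct2, THEN conjunct2, THEN conjunct1] by blast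
lemma Veq: "V = (\<Union>\<mu>\<in>N. skverts SE ends \<mu>)"
  using T[unfolded is_SPQR_tree_def, THEN conjunct2, THEN conjunct2, THEN conjunct2, THEN conjunct2, THEN conjunct2, THEN conjunct2, THEN conjunct2, THEN conjunct2, THEN conjunct2, THEN conjunct2, THEN conjunct2, THEN conjunct2, THEN conjunct2, THEN conjunct2, THEN conjunct2, THEN conjunct2] by blast

lemma nbr_inj: "\<mu> \<in> N \<Longrightarrow> g \<in> SE \<mu> - RealE \<Longrightarrow> h \<in> SE \<mu> - RealE \<Longrightarrow> nbr g = nbr h \<Longrightarrow> g = h"
  using nbr_bij by (meson bij_betw_def inj_onD)

lemma child_or_parent:
  assumes "p \<in> N" "g \<in> SE p - RealE"
  shows "nbr g \<in> N \<and> ((nbr g \<noteq> r \<and> par (nbr g) = p) \<or> (p \<noteq> r \<and> par p = nbr g))"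
proof -
  have "{p, nbr g} \<in> TE" using nbr_bij[OF assms(1)] assms(2) bij_betwE by blast
  thus ?thesis using TE_char TE_sub by blast
qed

lemma three:
  assumes p: "p \<in> N" and k: "kind p = PN \<or> kind p = RN" and t: "t \<in> SE p" and v: "v \<in> ends t"
  shows "3 \<le> card {g\<in>SE p. v \<in> ends g}"
  using k
proof
  assume "kind p = PN"
  from Pk[OF p this] obtain s0 t0 where st: "card (SE p) \<ge> 3" "\<forall>e\<in>SE p. ends e = {s0, t0}" by blast
  hence "{g\<in>SE p. v \<in> ends g} = SE p" using t v by auto
  thus ?thesis using st by simp
next
  assume "kind p = RN"
  from Rk[OF p this] have tc: "triconnected (skverts SE ends p) (ends ` SE p)" .
  define Ev where "Ev = {g\<in>SE p. v \<in> ends g}"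
  show ?thesis
  proof (rule ccontr)
    assume "\<not> 3 \<le> card {g\<in>SE p. v \<in> ends g}"
    hence cE: "card Ev \<le> 2" unfolding Ev_def by simp
    have finEv: "finite Ev" using finSE[OF p] Ev_def by simp
    define X where "X = (\<Union>g\<in>Ev. ends g - {v})"
    have cg: "\<And>g. g \<in> Ev \<Longrightarrow> card (ends g - {v}) = 1"
      using card2[OF p] Ev_def by auto
    have "card X \<le> (\<Sum>g\<in>Ev. card (ends g - {v}))" unfolding X_def by (rule card_UN_le[OF finEv])
    also have "\<dots> = card Ev" using cg by simp
    finally have cX: "card X \<le> 2" using cE by simp
    have XV: "X \<subseteq> skverts SE ends p" unfolding X_def Ev_def skverts_def by auto
    have vX: "v \<notin> X" unfolding X_def by auto
    have vV: "v \<in> skverts SE ends p" using t v unfolding skverts_def by auto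
    have finV: "finite (skverts SE ends p)" using tc unfolding triconnected_def by blast
    have c4: "card (skverts SE ends p) \<ge> 4" using tc unfolding triconnected_def by blast
    have conn: "connected_graph (skverts SE ends p - X) {e\<in>ends ` SE p. e \<inter> X = {}}"
      using tc XV cX unfolding triconnected_def by blast
    have "card (insert v X) \<le> 3" using cX vX finite_subset[OF XV finV] by simp
    moreover have "finite (insert v X)" using finite_subset[OF XV finV] by simp
    ultimately have "skverts SE ends p - insert v X \<noteq> {}"
    proof -
      assume a1: "card (insert v X) \<le> 3" and a2: "finite (insert v X)"
      show ?thesis
      proof
        assume "skverts SE ends p - insert v X = {}"
        hence "skverts SE ends p \<subseteq> insert v X" by blast
        hence "card (skverts SE ends p) \<le> card (insert v X)" using a2 by (rule card_mono[rotated])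
        thus False using a1 c4 by simp
      qed
    qed
    then obtain w where w: "w \<in> skverts SE ends p" "w \<noteq> v" "w \<notin> X" by blast
    have "(v, w) \<in> (adj {e\<in>{e\<in>ends ` SE p. e \<inter> X = {}}. e \<subseteq> skverts SE ends p - X})\<^sup>*"
    proof -
      have cg: "\<forall>a\<in>skverts SE ends p - X. \<forall>b\<in>skverts SE ends p - X.
          (a, b) \<in> (adj {e\<in>{e\<in>ends ` SE p. e \<inter> X = {}}. e \<subseteq> skverts SE ends p - X})\<^sup>*"
        using conn unfolding connected_graph_def .
      have a: "v \<in> skverts SE ends p - X" using vV vX by simp
      have b: "w \<in> skverts SE ends p - X" using w by simp
      show ?thesis using cg a b by (rule bspec2)
    qed
    then have "\<exists>u. (v, u) \<in> adj {e\<in>{e\<in>ends ` SE p. e \<inter> X = {}}. e \<subseteq> skverts SE ends p - X}"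
      by (rule first_step) (rule not_sym[OF w(2)])
    then obtain u where "(v, u) \<in> adj {e\<in>{e\<in>ends ` SE p. e \<inter> X = {}}. e \<subseteq> skverts SE ends p - X}"
      by (rule exE)
    hence u: "{v, u} \<in> ends ` SE p" "{v, u} \<inter> X = {}" unfolding adj_def by auto
    then obtain g where g: "g \<in> SE p" "ends g = {v, u}" by auto
    have "u \<noteq> v" using card2[OF p g(1)] g(2) by auto
    hence "u \<in> X" using g unfolding X_def Ev_def by auto
    thus False using u(2) by auto
  qed
qed


lemma other_edge:
  assumes p: "p \<in> N" and t: "t \<in> SE p" and v: "v \<in> ends t"
  shows "\<exists>g\<in>SE p. g \<noteq> t \<and> v \<in> ends g"
proof (cases "kind p")
  case QN
  from Qk[OF p QN] have "card (SE p) = 2" "\<forall>e\<in>SE p. \<forall>f\<in>SE p. ends e = ends f" by blast+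
  note q = this
  from q(1) obtain a b where ab: "SE p = {a, b}" "a \<noteq> b" by (auto simp: card_2_iff)
  have "\<exists>g\<in>SE p. g \<noteq> t" using ab by (cases "a = t") auto
  then obtain g where g: "g \<in> SE p" "g \<noteq> t" by blast
  have "ends g = ends t" using q(2) g(1) t by blast
  thus ?thesis using g v by auto
next
  case PN
  from three[OF p _ t v] PN have "3 \<le> card {g\<in>SE p. v \<in> ends g}" by simp
  moreover have "\<not> {g\<in>SE p. v \<in> ends g} \<subseteq> {t}"
  proof
    assume h: "{g\<in>SE p. v \<in> ends g} \<subseteq> {t}"
    have "card {g\<in>SE p. v \<in> ends g} \<le> card {t}" by (rule card_mono) (simp, rule h)
    thus False using \<open>3 \<le> card {g\<in>SE p. v \<in> ends g}\<close> by simp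
  qed
  ultimately have "\<not> {g\<in>SE p. v \<in> ends g} \<subseteq> {t}" by blast
  thus ?thesis by auto
next
  case RN
  from three[OF p _ t v] RN have "3 \<le> card {g\<in>SE p. v \<in> ends g}" by simp
  moreover have "\<not> {g\<in>SE p. v \<in> ends g} \<subseteq> {t}"
  proof
    assume h: "{g\<in>SE p. v \<in> ends g} \<subseteq> {t}"
    have "card {g\<in>SE p. v \<in> ends g} \<le> card {t}" by (rule card_mono) (simp, rule h)
    thus False using \<open>3 \<le> card {g\<in>SE p. v \<in> ends g}\<close> by simp
  qed
  ultimately have "\<not> {g\<in>SE p. v \<in> ends g} \<subseteq> {t}" by blast
  thus ?thesis by auto
next
  case SN
  from Sk[OF p SN] obtain vs where vs: "distinct vs" "length vs \<ge> 3" "set vs = skverts SE ends p"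
     "ends ` SE p = {{vs ! i, vs ! ((i + 1) mod length vs)} | i. i < length vs}"
    unfolding cycle_graph_def by blast
  define n where "n = length vs"
  have "v \<in> set vs" using vs(3) t v unfolding skverts_def by auto
  then obtain j where j: "j < n" "vs ! j = v" unfolding n_def by (metis in_set_conv_nth)
  define i0 where "i0 = (j + n - 1) mod n"
  have n3: "n \<ge> 3" using vs(2) n_def by simp
  have i0n: "i0 < n" using n3 i0_def by simp
  have i0s: "(i0 + 1) mod n = j"
  proof -
    have "(i0 + 1) mod n = (j + n - 1 + 1) mod n" unfolding i0_def by (simp add: mod_Suc_eq)
    also have "j + n - 1 + 1 = j + n" using n3 by simp
    finally show ?thesis using j(1) by simp
  qed
  have ne: "(j + 1) mod n \<noteq> i0"
  proof (cases "j = 0")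
    case True thus ?thesis using n3 unfolding i0_def by simp
  next
    case False
    show ?thesis
    proof (cases "j + 1 = n")
      case True
      have "j + n - 1 = (n - 2) + n" using True n3 by simp
      hence "i0 = n - 2" unfolding i0_def using n3 by (simp only: mod_add_self2) simp
      thus ?thesis using True n3 by simp
    next
      case False2: False
      have "j + n - 1 = (j - 1) + n" using \<open>j \<noteq> 0\<close> by simp
      hence "i0 = j - 1" unfolding i0_def using j(1) by (simp only: mod_add_self2) simp
      moreover have "(j + 1) mod n = j + 1" using j(1) False2 by simp
      ultimately show ?thesis by simp
    qed
  qed
  define a where "a = vs ! ((j + 1) mod n)"
  define b where "b = vs ! i0"
  have jn: "(j + 1) mod n < n" using n3 by simp
  have "a \<noteq> b" unfolding a_def b_def using ne vs(1) i0n n_def jn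
    by (simp add: nth_eq_iff_index_eq)
  have E1: "{v, a} \<in> ends ` SE p" unfolding vs(4) a_def using j n_def by blast
  have E2: "{b, v} \<in> ends ` SE p" unfolding vs(4) b_def using i0n i0s j n_def by blast
  have neq: "{v, a} \<noteq> {b, v}" using \<open>a \<noteq> b\<close> by (auto simp: doubleton_eq_iff)
  have "\<exists>X. X \<in> ends ` SE p \<and> X \<noteq> ends t \<and> v \<in> X"
  proof (cases "{v, a} = ends t")
    case True thus ?thesis using E2 neq by blast
  next
    case False thus ?thesis using E1 by blast
  qed
  then obtain X where X: "X \<in> ends ` SE p" "X \<noteq> ends t" "v \<in> X" by blast
  then obtain g where g: "g \<in> SE p" "ends g = X" by blast
  have "g \<noteq> t" using g X(2) by blast
  thus ?thesis using g X(3) by blast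
qed


lemma down:
  assumes "x \<in> N"
  shows "x \<noteq> r \<Longrightarrow> t \<in> SE x - RealE \<Longrightarrow> nbr t = par x \<Longrightarrow> v \<in> ends t \<Longrightarrow>
    \<exists>y f. y \<in> N \<and> (y, x) \<in> R\<^sup>* \<and> f \<in> SE y \<inter> RealE \<and> v \<in> ends f"
  using assms
proof (induction x arbitrary: t rule: wf_induct_rule[OF wfR])
  case (1 x)
  obtain g where g: "g \<in> SE x" "g \<noteq> t" "v \<in> ends g"
    using other_edge[OF 1(6)] 1(3,5) by blast
  show ?case
  proof (cases "g \<in> RealE")
    case True thus ?thesis using g 1(6) by blast
  next
    case False
    have gv: "g \<in> SE x - RealE" using g False by blast
    have "nbr g \<noteq> nbr t" using nbr_inj[OF 1(6) gv 1(3)] g(2) by blast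
    with child_or_parent[OF 1(6) gv] 1(4) have c: "nbr g \<in> N" "nbr g \<noteq> r" "par (nbr g) = x"
      by auto
    have cx: "(nbr g, x) \<in> R" using c by (simp add: R_iff)
    from twinP[OF 1(6) gv] have tw: "twin g \<in> SE (nbr g) - RealE" "nbr (twin g) = x" "ends (twin g) = ends g"
      by auto
    from 1(1)[OF cx c(2) tw(1) _ _ c(1)] tw c g(3)
    obtain y f where "y \<in> N" "(y, nbr g) \<in> R\<^sup>*" "f \<in> SE y \<inter> RealE" "v \<in> ends f" by auto
    thus ?thesis using cx by (meson rtrancl_into_rtrancl)
  qed
qed

lemma up:
  assumes "x \<in> N"
  shows "x \<noteq> r \<Longrightarrow> t \<in> SE x - RealE \<Longrightarrow> nbr t = par x \<Longrightarrow> v \<in> ends t \<Longrightarrow>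
    \<exists>y f. y \<in> N \<and> (y, x) \<notin> R\<^sup>* \<and> f \<in> SE y \<inter> RealE \<and> v \<in> ends f"
  using assms
proof (induction x arbitrary: t rule: wf_induct_rule[OF wfR'])
  case (1 x)
  define p where "p = par x"
  have pN: "p \<in> N" using par_in 1 p_def by blast
  have xp: "(x, p) \<in> R" using 1 p_def by (simp add: R_iff)
  have px: "(p, x) \<notin> R\<^sup>*"
  proof
    assume "(p, x) \<in> R\<^sup>*"
    hence "(x, x) \<in> R\<^sup>+" using xp by (meson rtrancl_into_trancl2)
    thus False using acyc unfolding acyclic_def by blast
  qed
  from twinP[OF 1(6) 1(3)] 1(4) have s: "twin t \<in> SE p - RealE" "nbr (twin t) = x" "ends (twin t) = ends t"
    by (auto simp: p_def)
  show ?case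
  proof (cases "kind p = QN")
    case True
    from Qk[OF pN True] have q: "card (SE p \<inter> RealE) = 1" "\<forall>e\<in>SE p. \<forall>f\<in>SE p. ends e = ends f" by blast+
    then obtain f where f: "SE p \<inter> RealE = {f}" by (meson card_1_singletonE)
    have "ends f = ends (twin t)" using q(2) f s(1) by blast
    hence "v \<in> ends f" using s(3) 1(5) by simp
    thus ?thesis using pN px f by blast
  next
    case False
    obtain g where g: "g \<in> SE p" "g \<noteq> twin t" "v \<in> ends g"
      using other_edge[OF pN] s(1,3) 1(5) by (metis DiffD1)
    have gv: "g \<in> SE p - RealE" using g nonQ[OF pN False] by blast
    have ng: "nbr g \<noteq> x" using nbr_inj[OF pN gv s(1)] g(2) s(2) by auto
    from twinP[OF pN gv] have tw: "twin g \<in> SE (nbr g) - RealE" "nbr (twin g) = p" "ends (twin g) = ends g"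
      by auto
    from child_or_parent[OF pN gv] have "nbr g \<in> N" and
      cases: "(nbr g \<noteq> r \<and> par (nbr g) = p) \<or> (p \<noteq> r \<and> par p = nbr g)" by auto
    from cases show ?thesis
    proof
      assume c: "nbr g \<noteq> r \<and> par (nbr g) = p"
      have e1: "nbr (twin g) = par (nbr g)" using tw(2) c by simp
      have e2: "v \<in> ends (twin g)" using tw(3) g(3) by simp
      from down[OF \<open>nbr g \<in> N\<close> _ tw(1) e1 e2] c
      obtain y f where y: "y \<in> N" "(y, nbr g) \<in> R\<^sup>*" "f \<in> SE y \<inter> RealE" "v \<in> ends f" by blast
      have "(y, x) \<notin> R\<^sup>*"
        using sibling[OF ng \<open>nbr g \<in> N\<close> 1(6) _ 1(2)] c y(2) p_def by blast
      thus ?thesis using y by blast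
    next
      assume c: "p \<noteq> r \<and> par p = nbr g"
      have "(p, x) \<in> R\<inverse>" using xp by simp
      from 1(1)[OF this _ gv _ _ pN] c g(3)
      obtain y f where y: "y \<in> N" "(y, p) \<notin> R\<^sup>*" "f \<in> SE y \<inter> RealE" "v \<in> ends f" by auto
      have "(y, x) \<notin> R\<^sup>*" using y(2) xp by (meson rtrancl_into_rtrancl)
      thus ?thesis using y by blast
    qed
  qed
qed


lemma finRealE: "finite RealE"
proof -
  have "finite (\<Union>\<mu>\<in>N. SE \<mu>)" using finN finSE by blast
  thus ?thesis using realsub finite_subset by blast
qed

lemma finE: "finite E"
  using bijE finRealE bij_betw_imp_surj_on by blast

lemma count:
  assumes F: "finite F" "F \<subseteq> RealE" "\<forall>f\<in>F. v \<in> ends f \<and> (\<forall>\<nu>\<in>N. (\<nu>, \<mu>) \<in> R\<^sup>* \<longrightarrow> f \<notin> SE \<nu>)"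
  shows "degree (pertinent_edges N r par SE ends RealE \<mu>) v + card F \<le> degree E v"
proof -
  define P where "P = pertinent_edges N r par SE ends RealE \<mu>"
  define A where "A = {e\<in>P. v \<in> e}"
  define B where "B = {e\<in>E. v \<in> e}"
  have inj: "inj_on ends RealE" using bijE unfolding bij_betw_def by blast
  have PE: "P \<subseteq> E" unfolding P_def pertinent_edges_def using bijE bij_betwE by blast
  have AB: "A \<subseteq> B" using PE A_def B_def by blast
  have FB: "ends ` F \<subseteq> B" using F bijE bij_betwE B_def by blast
  have FA: "ends ` F \<inter> A = {}"
  proof (rule ccontr)
    assume "ends ` F \<inter> A \<noteq> {}"
    then obtain f where f: "f \<in> F" "ends f \<in> P" unfolding A_def by blast
    then obtain f' \<nu> where h: "ends f = ends f'" "\<nu> \<in> N" "(\<nu>, \<mu>) \<in> R\<^sup>*" "f' \<in> SE \<nu> \<inter> RealE"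
      unfolding P_def pertinent_edges_def by blast
    have "f = f'" using inj_onD[OF inj h(1)] f(1) F(2) h(4) by blast
    thus False using F(3) f(1) h by blast
  qed
  have finB: "finite B" using finE B_def by simp
  have "card A + card (ends ` F) = card (A \<union> ends ` F)"
    using FA finite_subset[OF AB finB] F(1) by (simp add: card_Un_disjoint inf_commute)
  also have "\<dots> \<le> card B" using AB FB finB by (simp add: card_mono)
  finally have "card A + card (ends ` F) \<le> card B" .
  moreover have "card (ends ` F) = card F" using card_image inj_on_subset[OF inj F(2)] by blast
  ultimately show ?thesis unfolding degree_def A_def B_def P_def by simp
qed

lemma dir:
  assumes pN: "p \<in> N" and k: "kind p \<noteq> QN" and g: "g \<in> SE p - RealE" and v: "v \<in> ends g"
  shows "\<exists>y f. y \<in> N \<and> f \<in> SE y \<inter> RealE \<and> v \<in> ends f \<and>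
     ((p \<noteq> r \<and> nbr g = par p \<and> (y, p) \<notin> R\<^sup>*) \<or> (nbr g \<noteq> r \<and> par (nbr g) = p \<and> (y, nbr g) \<in> R\<^sup>*))"
proof -
  from twinP[OF pN g] have tw: "twin g \<in> SE (nbr g) - RealE" "nbr (twin g) = p" "ends (twin g) = ends g"
    by auto
  from child_or_parent[OF pN g] have cN: "nbr g \<in> N" and
    cases: "(nbr g \<noteq> r \<and> par (nbr g) = p) \<or> (p \<noteq> r \<and> par p = nbr g)" by auto
  from cases show ?thesis
  proof
    assume c: "nbr g \<noteq> r \<and> par (nbr g) = p"
    have e1: "nbr (twin g) = par (nbr g)" using tw(2) c by simp
    have e2: "v \<in> ends (twin g)" using tw(3) v by simp
    from down[OF cN _ tw(1) e1 e2] c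
    obtain y f where y: "y \<in> N" "(y, nbr g) \<in> R\<^sup>*" "f \<in> SE y \<inter> RealE" "v \<in> ends f" by blast
    thus ?thesis using c by blast
  next
    assume c: "p \<noteq> r \<and> par p = nbr g"
    have e1: "nbr g = par p" using c by simp
    from up[OF pN _ g e1 v] c
    obtain y f where y: "y \<in> N" "(y, p) \<notin> R\<^sup>*" "f \<in> SE y \<inter> RealE" "v \<in> ends f" by blast
    thus ?thesis using c by auto
  qed
qed

lemma outside:
  assumes "y \<in> N" "f \<in> SE y" "(y, \<mu>) \<notin> R\<^sup>*"
  shows "\<forall>\<nu>\<in>N. (\<nu>, \<mu>) \<in> R\<^sup>* \<longrightarrow> f \<notin> SE \<nu>"
  using assms disjSE by blast

lemma main_loc:
  assumes deg: "\<forall>x\<in>V. degree E x \<le> k"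
    and "\<mu> \<in> N" and "\<mu> \<noteq> r"
    and e: "e \<in> SE \<mu> - RealE" and "nbr e = par \<mu>"
    and v: "v \<in> ends e"
  shows "int (degree (pertinent_edges N r par SE ends RealE \<mu>) v)
           \<le> (if kind (par \<mu>) = PN \<or> kind (par \<mu>) = RN then int k - 2 else int k - 1)"
proof -
  define p where "p = par \<mu>"
  have pN: "p \<in> N" using par_in assms p_def by blast
  have mp: "(\<mu>, p) \<in> R" using assms p_def by (simp add: R_iff)
  have vV: "v \<in> V" using Veq assms unfolding skverts_def by blast
  have dk: "degree E v \<le> k" using deg vV by blast
  define D where "D = degree (pertinent_edges N r par SE ends RealE \<mu>) v"
  show ?thesis
  proof (cases "kind p = PN \<or> kind p = RN")
    case False
    from up[OF \<open>\<mu> \<in> N\<close>] assms obtain y f where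
      y: "y \<in> N" "(y, \<mu>) \<notin> R\<^sup>*" "f \<in> SE y \<inter> RealE" "v \<in> ends f" by blast
    have "D + card {f} \<le> degree E v"
      unfolding D_def by (rule count) (use y outside in auto)
    thus ?thesis using False dk p_def D_def by simp
  next
    case True
    have kq: "kind p \<noteq> QN" using True by auto
    from twinP[OF \<open>\<mu> \<in> N\<close> e] have te: "twin e \<in> SE p - RealE" "nbr (twin e) = \<mu>" "ends (twin e) = ends e"
      using assms p_def by auto
    define S where "S = {g\<in>SE p. v \<in> ends g}"
    have c3: "3 \<le> card S" unfolding S_def using three[OF pN True _ ] te v by auto
    have finS: "finite S" using finSE[OF pN] S_def by simp
    have c2: "2 \<le> card (S - {twin e})"
    proof -
      have "card S - 1 \<le> card (S - {twin e})" by (simp add: card_Diff_singleton_if)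
      thus ?thesis using c3 by linarith
    qed
    hence "S - {twin e} \<noteq> {}" by (metis card.empty not_numeral_le_zero)
    then obtain g1 where g1: "g1 \<in> S" "g1 \<noteq> twin e" by blast
    have "1 \<le> card (S - {twin e} - {g1})"
    proof -
      have "card (S - {twin e}) - 1 \<le> card (S - {twin e} - {g1})" by (simp add: card_Diff_singleton_if)
      thus ?thesis using c2 by linarith
    qed
    hence "S - {twin e} - {g1} \<noteq> {}" by (metis card.empty not_one_le_zero)
    then obtain g2 where g2: "g2 \<in> S" "g2 \<noteq> twin e" "g2 \<noteq> g1" by blast
    have g1v: "g1 \<in> SE p - RealE" "v \<in> ends g1" using g1 S_def nonQ[OF pN kq] by auto
    have g2v: "g2 \<in> SE p - RealE" "v \<in> ends g2" using g2 S_def nonQ[OF pN kq] by auto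
    have n1: "nbr g1 \<noteq> \<mu>" using nbr_inj[OF pN g1v(1) te(1)] te(2) g1 by auto
    have n2: "nbr g2 \<noteq> \<mu>" using nbr_inj[OF pN g2v(1) te(1)] te(2) g2 by auto
    have n12: "nbr g1 \<noteq> nbr g2" using nbr_inj[OF pN g1v(1) g2v(1)] g2 by auto
    have mpar: "par \<mu> = p" using p_def by simp
    from dir[OF pN kq g1v] obtain y1 f1 where y1: "y1 \<in> N" "f1 \<in> SE y1 \<inter> RealE" "v \<in> ends f1"
      "(p \<noteq> r \<and> nbr g1 = par p \<and> (y1, p) \<notin> R\<^sup>*) \<or> (nbr g1 \<noteq> r \<and> par (nbr g1) = p \<and> (y1, nbr g1) \<in> R\<^sup>*)"
      by blast
    from dir[OF pN kq g2v] obtain y2 f2 where y2: "y2 \<in> N" "f2 \<in> SE y2 \<inter> RealE" "v \<in> ends f2"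
      "(p \<noteq> r \<and> nbr g2 = par p \<and> (y2, p) \<notin> R\<^sup>*) \<or> (nbr g2 \<noteq> r \<and> par (nbr g2) = p \<and> (y2, nbr g2) \<in> R\<^sup>*)"
      by blast
    have chN1: "nbr g1 \<in> N" using child_or_parent[OF pN g1v(1)] by blast
    have chN2: "nbr g2 \<in> N" using child_or_parent[OF pN g2v(1)] by blast
    have o1: "(y1, \<mu>) \<notin> R\<^sup>*"
      using y1(4)
    proof
      assume h: "p \<noteq> r \<and> nbr g1 = par p \<and> (y1, p) \<notin> R\<^sup>*"
      show ?thesis using h mp by (meson rtrancl_into_rtrancl)
    next
      assume h: "nbr g1 \<noteq> r \<and> par (nbr g1) = p \<and> (y1, nbr g1) \<in> R\<^sup>*"
      show ?thesis using sibling[OF n1 chN1 \<open>\<mu> \<in> N\<close> _ \<open>\<mu> \<noteq> r\<close>] h mpar by auto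
    qed
    have o2: "(y2, \<mu>) \<notin> R\<^sup>*"
      using y2(4)
    proof
      assume h: "p \<noteq> r \<and> nbr g2 = par p \<and> (y2, p) \<notin> R\<^sup>*"
      show ?thesis using h mp by (meson rtrancl_into_rtrancl)
    next
      assume h: "nbr g2 \<noteq> r \<and> par (nbr g2) = p \<and> (y2, nbr g2) \<in> R\<^sup>*"
      show ?thesis using sibling[OF n2 chN2 \<open>\<mu> \<in> N\<close> _ \<open>\<mu> \<noteq> r\<close>] h mpar by auto
    qed
    have y12: "y1 \<noteq> y2"
    proof
      assume eq: "y1 = y2"
      show False using y1(4)
      proof
        assume h1: "p \<noteq> r \<and> nbr g1 = par p \<and> (y1, p) \<notin> R\<^sup>*"
        show False using y2(4)
        proof
          assume "p \<noteq> r \<and> nbr g2 = par p \<and> (y2, p) \<notin> R\<^sup>*" thus False using h1 n12 by simp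
        next
          assume h2: "nbr g2 \<noteq> r \<and> par (nbr g2) = p \<and> (y2, nbr g2) \<in> R\<^sup>*"
          have "(nbr g2, p) \<in> R" using h2 chN2 by (simp add: R_iff)
          thus False using h1 h2 eq by (meson rtrancl_into_rtrancl)
        qed
      next
        assume h1: "nbr g1 \<noteq> r \<and> par (nbr g1) = p \<and> (y1, nbr g1) \<in> R\<^sup>*"
        show False using y2(4)
        proof
          assume h2: "p \<noteq> r \<and> nbr g2 = par p \<and> (y2, p) \<notin> R\<^sup>*"
          have "(nbr g1, p) \<in> R" using h1 chN1 by (simp add: R_iff)
          thus False using h1 h2 eq by (meson rtrancl_into_rtrancl)
        next
          assume h2: "nbr g2 \<noteq> r \<and> par (nbr g2) = p \<and> (y2, nbr g2) \<in> R\<^sup>*"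
          show False using sibling[OF n12 chN1 chN2] h1 h2 eq by auto
        qed
      qed
    qed
    have f12: "f1 \<noteq> f2" using y1(1,2) y2(1,2) y12 disjSE by blast
    have out1: "\<forall>\<nu>\<in>N. (\<nu>, \<mu>) \<in> R\<^sup>* \<longrightarrow> f1 \<notin> SE \<nu>"
      using outside[OF y1(1) _ o1] y1(2) by blast
    have out2: "\<forall>\<nu>\<in>N. (\<nu>, \<mu>) \<in> R\<^sup>* \<longrightarrow> f2 \<notin> SE \<nu>"
      using outside[OF y2(1) _ o2] y2(2) by blast
    have Fp: "\<forall>f\<in>{f1, f2}. v \<in> ends f \<and> (\<forall>\<nu>\<in>N. (\<nu>, \<mu>) \<in> R\<^sup>* \<longrightarrow> f \<notin> SE \<nu>)"
      using out1 out2 y1(3) y2(3) by blast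
    have Fs: "{f1, f2} \<subseteq> RealE" using y1(2) y2(2) by blast
    have "D + card {f1, f2} \<le> degree E v"
      unfolding D_def by (rule count[OF _ Fs Fp]) simp
    thus ?thesis using True dk p_def D_def f12 by simp
  qed
qed

end

theorem mainTheorem1:
  fixes V :: "'v set" and E :: "'v set set" and k :: nat
    and N :: "'n set" and TE :: "'n set set" and kind :: "'n \<Rightarrow> node_kind"
    and SE :: "'n \<Rightarrow> 'e set" and ends :: "'e \<Rightarrow> 'v set" and RealE :: "'e set"
    and nbr :: "'e \<Rightarrow> 'n" and twin :: "'e \<Rightarrow> 'e"
    and r :: 'n and par :: "'n \<Rightarrow> 'n" and \<mu> :: 'n and e :: 'e and v :: 'v
  assumes "simple_graph V E" and "biconnected V E" and "planar V E"
    and "\<forall>x\<in>V. degree E x \<le> k"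
    and "is_SPQR_tree V E N TE kind SE ends RealE nbr twin"
    and "rooted_at N TE r par" and "kind r = QN"
    and "\<mu> \<in> N" and "\<mu> \<noteq> r"
    and "e \<in> SE \<mu> - RealE" and "nbr e = par \<mu>"
    and "v \<in> ends e"
  shows "int (degree (pertinent_edges N r par SE ends RealE \<mu>) v)
           \<le> (if kind (par \<mu>) = PN \<or> kind (par \<mu>) = RN then int k - 2 else int k - 1)"
proof -
  interpret S: spqr V E N TE kind SE ends RealE nbr twin r par
    by unfold_locales (use assms in auto)
  show ?thesis using S.main_loc assms by blast
qed

end
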